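(* For all integers $n,h,b\ge0$, $G_n(h,b)=H_n(h,b)$, where $G_n(h,b)=|\mathcal{B}^{(h,b)}_{n+1}(231)|$ and $H_n(h,b)=|\mathcal{H}(n;h,b)|$. In particular, for every $n\ge1$, $|\mathcal{B}_n(231)|=C(\lfloor n/2\rfloor)\,C(\lfloor (n+1)/2\rfloor)$, where $C(m)=\frac{1}{m+1}\binom{2m}{m}$.
   Context: For integers $h,b\ge0$, a permutation $\pi\in\mathfrak{S}_{n+1}$ is an $(h,b)$-ballot permutation if the lattice path starting at $(0,h)$ whose $i$th step ($i\in[n]$) is $(1,1)$ if $\pi_i<\pi_{i+1}$ and $(1,-1)$ if $\pi_i>\pi_{i+1}$ ends at $(n,b)$ and never goes below the $x$-axis. Ballot permutations $\mathcal{B}_m$ are the $(0,b)$-ballot permutations in $\mathfrak{S}_m$ for some $b\ge0$ (every prefix has at most as many descents as ascents). $\mathcal{B}^{(h,b)}_{n+1}(231)$ (resp. $\mathcal{B}_m(231)$) denotes those with no subsequence order-isomorphic to $231$. A Gouyou-Beauchamps (GB) walk is a lattice path confined to $\{(x,y)\in\mathbb{N}^2: y\le x\}$ with steps from $\{(0,1),(0,-1),(-1,0),(1,0)\}$; $\mathcal{H}(n;h,b)$ is the set of $n$-step GB walks from $(h,0)$ to $(b,0)$. *)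

theory Defs
  imports Complex_Main
begin

definition is_perm :: "nat \<Rightarrow> nat list \<Rightarrow> bool" where
  "is_perm m p \<longleftrightarrow> length p = m \<and> distinct p \<and> set p = {1..m}"

definition path_height :: "nat \<Rightarrow> nat list \<Rightarrow> nat \<Rightarrow> int" where
  "path_height h p k = int h + (\<Sum>i<k. if p ! i < p ! (i+1) then 1 else -1)"

definition hb_ballot :: "nat \<Rightarrow> nat \<Rightarrow> nat \<Rightarrow> nat list \<Rightarrow> bool" where
  "hb_ballot n h b p \<longleftrightarrow> is_perm (n+1) p \<and>
     (\<forall>k\<le>n. path_height h p k \<ge> 0) \<and> path_height h p n = int b"

definition ballot_perm :: "nat \<Rightarrow> nat list \<Rightarrow> bool" where
  "ballot_perm m p \<longleftrightarrow> is_perm m p \<and> (\<forall>k\<le>m-1. path_height 0 p k \<ge> 0)"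

definition contains_231 :: "nat list \<Rightarrow> bool" where
  "contains_231 p \<longleftrightarrow> (\<exists>i j k. i < j \<and> j < k \<and> k < length p \<and> p ! k < p ! i \<and> p ! i < p ! j)"

definition G :: "nat \<Rightarrow> nat \<Rightarrow> nat \<Rightarrow> nat" where
  "G n h b = card {p. hb_ballot n h b p \<and> \<not> contains_231 p}"

text \<open>Gouyou-Beauchamps walks: a walk with n steps is the list of its n+1 visited points.\<close>
definition GB_region :: "int \<times> int \<Rightarrow> bool" where
  "GB_region q \<longleftrightarrow> 0 \<le> snd q \<and> snd q \<le> fst q"

definition GB_step :: "int \<times> int \<Rightarrow> int \<times> int \<Rightarrow> bool" where
  "GB_step q r \<longleftrightarrow> (fst r - fst q, snd r - snd q) \<in> {(0,1), (0,-1), (-1,0), (1,0)}"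

definition GB_walks :: "nat \<Rightarrow> nat \<Rightarrow> nat \<Rightarrow> (int \<times> int) list set" where
  "GB_walks n h b = {w. length w = n + 1 \<and> w ! 0 = (int h, 0) \<and> w ! n = (int b, 0) \<and>
     (\<forall>i\<le>n. GB_region (w ! i)) \<and> (\<forall>i<n. GB_step (w ! i) (w ! (i+1)))}"

definition H :: "nat \<Rightarrow> nat \<Rightarrow> nat \<Rightarrow> nat" where
  "H n h b = card (GB_walks n h b)"

definition catalan :: "nat \<Rightarrow> real" where
  "catalan m = (1 / real (m + 1)) * real (2 * m choose m)"

end

theory Submission
  imports Defs
begin


definition inc :: "nat \<Rightarrow> nat \<Rightarrow> nat" where "inc v x = (if v \<le> x then x+1 else x)"
definition dec :: "nat \<Rightarrow> nat \<Rightarrow> nat" where "dec v x = (if v < x then x-1 else x)"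
definition ext :: "nat list \<Rightarrow> nat \<Rightarrow> nat list" where "ext q v = map (inc v) q @ [v]"

lemma ext_len[simp]: "length (ext q v) = Suc (length q)" by (simp add: ext_def)
lemma ext_nth1: "i < length q \<Longrightarrow> ext q v ! i = inc v (q!i)" by (simp add: ext_def nth_append)
lemma ext_nth2: "ext q v ! length q = v" by (simp add: ext_def nth_append)
lemma ext_last[simp]: "last (ext q v) = v" by (simp add: ext_def)
lemma inc_less_iff[simp]: "inc v x < inc v y \<longleftrightarrow> x < y" by (auto simp: inc_def)
lemma inc_neq: "inc v x \<noteq> v" by (auto simp: inc_def)
lemma inc_inj: "inj (inc v)" by (auto simp: inj_def inc_def split: if_splits)

lemma perm_ext:
  assumes "is_perm (Suc m) q" "1 \<le> v" "v \<le> Suc (Suc m)"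
  shows "is_perm (Suc (Suc m)) (ext q v)"
proof -
  have d: "distinct q" and s: "set q = {1..Suc m}" and l: "length q = Suc m"
    using assms(1) by (auto simp: is_perm_def)
  have "distinct (map (inc v) q)" using d inc_inj by (simp add: distinct_map inj_on_def inj_def)
  moreover have "v \<notin> set (map (inc v) q)" by (auto simp: inc_def)
  moreover have "inc v ` {1..Suc m} \<union> {v} = {1..Suc (Suc m)}"
  proof -
    have "x \<in> inc v ` {1..Suc m} \<union> {v}" if "x \<in> {1..Suc (Suc m)}" for x
    proof (cases "x = v")
      case False
      show ?thesis
      proof (cases "x < v")
        case True then show ?thesis using that assms(3) by (auto simp: inc_def intro!: image_eqI[where x=x])
      next
        case F: False then show ?thesis using that False assms(2)
          by (auto simp: inc_def intro!: image_eqI[where x="x-1"])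
      qed
    qed simp
    moreover have "inc v ` {1..Suc m} \<union> {v} \<subseteq> {1..Suc (Suc m)}" using assms by (auto simp: inc_def)
    ultimately show ?thesis by blast
  qed
  ultimately show ?thesis using l s by (simp add: is_perm_def ext_def)
qed

lemma perm_decomp:
  assumes "is_perm (Suc (Suc m)) p"
  shows "is_perm (Suc m) (map (dec (last p)) (butlast p)) \<and> p = ext (map (dec (last p)) (butlast p)) (last p)"
proof -
  define v where "v = last p"
  define r where "r = butlast p"
  have pe: "p = r @ [v]" using assms unfolding v_def r_def is_perm_def
    by (metis append_butlast_last_id list.size(3) nat.distinct(1))
  have d: "distinct p" and s: "set p = {1..Suc (Suc m)}" and l: "length p = Suc (Suc m)"
    using assms by (auto simp: is_perm_def)
  have vr: "v \<notin> set r" and dr: "distinct r" using d pe by auto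
  have lr: "length r = Suc m" using l pe by simp
  have sr: "set r = {1..Suc (Suc m)} - {v}" using s pe d by auto
  have v1: "v \<in> {1..Suc (Suc m)}" using s pe by auto
  have id: "map (inc v) (map (dec v) r) = r"
    using vr by (auto simp: inc_def dec_def intro!: map_idI)
  have injd: "inj_on (dec v) (set r)"
  proof (rule inj_onI)
    fix x y assume x: "x \<in> set r" and y: "y \<in> set r" and e: "dec v x = dec v y"
    have "x \<noteq> v" "y \<noteq> v" using vr x y by auto
    then show "x = y" using e by (auto simp: dec_def split: if_splits)
  qed
  have "dec v ` ({1..Suc (Suc m)} - {v}) = {1..Suc m}"
  proof
    show "dec v ` ({1..Suc (Suc m)} - {v}) \<subseteq> {1..Suc m}" using v1 by (auto simp: dec_def)
    show "{1..Suc m} \<subseteq> dec v ` ({1..Suc (Suc m)} - {v})"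
    proof
      fix x assume x: "x \<in> {1..Suc m}"
      show "x \<in> dec v ` ({1..Suc (Suc m)} - {v})"
      proof (cases "x < v")
        case True then show ?thesis using x by (auto simp: dec_def intro!: image_eqI[where x=x])
      next
        case False then show ?thesis using x by (auto simp: dec_def intro!: image_eqI[where x="x+1"])
      qed
    qed
  qed
  then have "is_perm (Suc m) (map (dec v) r)"
    using injd dr lr sr by (simp add: is_perm_def distinct_map)
  moreover have "p = ext (map (dec v) r) v" using pe id by (simp add: ext_def)
  ultimately show ?thesis unfolding v_def r_def by simp
qed


lemma last_conv_nth_perm: "is_perm (Suc m) q \<Longrightarrow> last q = q ! m"
  by (clarsimp simp: is_perm_def, subst last_conv_nth, auto)

lemma c231_ext:
  assumes "is_perm (Suc m) q" "1 \<le> v"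
  shows "contains_231 (ext q v) \<longleftrightarrow> contains_231 q \<or> v < last q"
proof
  have l: "length q = Suc m" and d: "distinct q" and s: "set q = {1..Suc m}" using assms by (auto simp: is_perm_def)
  have lq: "last q = q ! m" using assms(1) by (rule last_conv_nth_perm)
  assume "contains_231 (ext q v)"
  then obtain i j k where ijk: "i < j" "j < k" "k < Suc (Suc m)"
    and o: "ext q v ! k < ext q v ! i" "ext q v ! i < ext q v ! j"
    using l by (auto simp: contains_231_def)
  show "contains_231 q \<or> v < last q"
  proof (cases "k < Suc m")
    case True
    then have "q ! k < q ! i" "q ! i < q ! j" using o ijk l by (simp_all add: ext_nth1)
    then show ?thesis using ijk True l unfolding contains_231_def by (intro disjI1 exI[of _ i] exI[of _ j] exI[of _ k]) simp
  next
    case False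
    then have k: "k = Suc m" using ijk by simp
    have ek: "ext q v ! k = v" using k l ext_nth2[of q v] by simp
    have ei: "ext q v ! i = inc v (q!i)" "ext q v ! j = inc v (q!j)" using ijk k l by (simp_all add: ext_nth1)
    have qi: "v \<le> q ! i" using o(1) ek ei by (auto simp: inc_def split: if_splits)
    have qij: "q ! i < q ! j" using o(2) ei by simp
    show ?thesis
    proof (rule ccontr)
      assume nc: "\<not> (contains_231 q \<or> v < last q)"
      have "i \<noteq> m" using ijk k by simp
      then have "q ! i \<noteq> q ! m" using d l ijk k by (simp add: nth_eq_iff_index_eq)
      then have gt: "q ! m < q ! i" using nc qi lq by simp
      show False
      proof (cases "j = m")
        case True then show False using gt qij by simp
      next
        case False
        then have "j < m" using ijk k by simp
        then have "contains_231 q" using gt qij ijk l unfolding contains_231_def by (intro exI[of _ i] exI[of _ j] exI[of _ m]) simp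
        then show False using nc by simp
      qed
    qed
  qed
next
  have l: "length q = Suc m" and d: "distinct q" and s: "set q = {1..Suc m}" using assms by (auto simp: is_perm_def)
  have lq: "last q = q ! m" using assms(1) by (rule last_conv_nth_perm)
  assume "contains_231 q \<or> v < last q"
  then show "contains_231 (ext q v)"
  proof
    assume "contains_231 q"
    then obtain i j k where ijk: "i < j" "j < k" "k < Suc m" "q ! k < q ! i" "q ! i < q ! j"
      using l by (auto simp: contains_231_def)
    then show ?thesis unfolding contains_231_def using l
      by (intro exI[of _ i] exI[of _ j] exI[of _ k]) (simp add: ext_nth1)
  next
    assume vl: "v < last q"
    have "last q \<in> set q" using l by (intro last_in_set) auto
    then have "v \<in> set q" using vl s assms(2) by auto
    then obtain i where i: "i < Suc m" "q ! i = v" using l by (metis in_set_conv_nth)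
    have "i \<noteq> m" using i vl lq by auto
    then have im: "i < m" using i by simp
    have "ext q v ! Suc m = v" using l ext_nth2[of q v] by simp
    moreover have "ext q v ! i = v + 1" using i l by (simp add: ext_nth1 inc_def)
    moreover have "ext q v ! m = last q + 1" using l lq vl by (simp add: ext_nth1 inc_def)
    ultimately show ?thesis unfolding contains_231_def using im vl l
      by (intro exI[of _ i] exI[of _ m] exI[of _ "Suc m"]) simp
  qed
qed

lemma ph_ext:
  assumes "length q = Suc m" "k \<le> m"
  shows "path_height h (ext q v) k = path_height h q k"
  unfolding path_height_def using assms by (intro arg_cong2[where f="(+)"] refl sum.cong) (simp_all add: ext_nth1)

lemma ph_ext_last:
  assumes "length q = Suc m"
  shows "path_height h (ext q v) (Suc m) = path_height h q m + (if last q < v then 1 else -1)"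
proof -
  have "path_height h (ext q v) (Suc m) = path_height h (ext q v) m + (if ext q v ! m < ext q v ! Suc m then 1 else -1)"
    by (simp add: path_height_def)
  moreover have "ext q v ! m = inc v (last q)" using assms by (simp add: ext_nth1, subst last_conv_nth, auto)
  moreover have "ext q v ! Suc m = v" using assms ext_nth2 by metis
  moreover have "inc v (last q) < v \<longleftrightarrow> last q < v" by (auto simp: inc_def)
  ultimately show ?thesis using ph_ext[OF assms, of m] by simp
qed


definition Sset :: "nat \<Rightarrow> nat \<Rightarrow> nat \<Rightarrow> nat \<Rightarrow> nat list set" where
  "Sset h m y a = {p. is_perm (Suc m) p \<and> \<not> contains_231 p \<and> (\<forall>k\<le>m. 0 \<le> path_height h p k)
      \<and> path_height h p m = int y \<and> last p + a = Suc m}"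

lemma perm_last: "is_perm (Suc m) q \<Longrightarrow> 1 \<le> last q \<and> last q \<le> Suc m"
proof -
  assume a: "is_perm (Suc m) q"
  then have "last q \<in> set q" by (intro last_in_set) (auto simp: is_perm_def)
  then show ?thesis using a by (auto simp: is_perm_def)
qed

lemma perm_finite: "finite {p. is_perm m p}"
proof -
  have "{p. is_perm m p} \<subseteq> {xs. set xs \<subseteq> {1..m} \<and> length xs = m}" by (auto simp: is_perm_def)
  then show ?thesis using finite_lists_length_eq[of "{1..m}" m] by (rule finite_subset) simp
qed

lemma Sset_finite: "finite (Sset h m y a)"
  by (rule finite_subset[OF _ perm_finite[of "Suc m"]]) (auto simp: Sset_def)

lemma Sset_big: "m < a \<Longrightarrow> Sset h m y a = {}"
  using perm_last by (fastforce simp: Sset_def)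

lemma Sset_Suc:
  assumes "a \<le> Suc m"
  shows "Sset h (Suc m) y a = (\<lambda>q. ext q (Suc (Suc m) - a)) `
     ((if 1 \<le> a then Sset h m (Suc y) (a-1) else {}) \<union>
      (if 1 \<le> y then (\<Union>a0\<in>{a..m}. Sset h m (y-1) a0) else {}))"
    (is "?L = ?f ` (?D \<union> ?A)")
proof
  define v where "v = Suc (Suc m) - a"
  have v1: "1 \<le> v" "v \<le> Suc (Suc m)" using assms by (auto simp: v_def)
  show "?L \<subseteq> ?f ` (?D \<union> ?A)"
  proof
    fix p assume p: "p \<in> ?L"
    then have pp: "is_perm (Suc (Suc m)) p" and n231: "\<not> contains_231 p"
      and hp: "\<forall>k\<le>Suc m. 0 \<le> path_height h p k" and hy: "path_height h p (Suc m) = int y"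
      and la: "last p + a = Suc (Suc m)"
      by (auto simp: Sset_def)
    define q where "q = map (dec (last p)) (butlast p)"
    have qp: "is_perm (Suc m) q" and pe: "p = ext q (last p)" using perm_decomp[OF pp] by (auto simp: q_def)
    have lp: "last p = v" using la by (simp add: v_def)
    have pe': "p = ext q v" using pe lp by simp
    have lq: "length q = Suc m" using qp by (simp add: is_perm_def)
    have nq: "\<not> contains_231 q" and lqv: "last q \<le> v" using n231 c231_ext[OF qp v1(1)] pe' by auto
    have hq: "\<forall>k\<le>m. 0 \<le> path_height h q k" using hp ph_ext[OF lq] pe' by (metis le_SucI)
    have hlast: "path_height h p (Suc m) = path_height h q m + (if last q < v then 1 else -1)"
      using ph_ext_last[OF lq] pe' by simp
    have ql: "1 \<le> last q" "last q \<le> Suc m" using perm_last[OF qp] by auto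
    show "p \<in> ?f ` (?D \<union> ?A)"
    proof (cases "last q = v")
      case True
      then have "path_height h q m = int (Suc y)" using hlast hy by simp
      moreover have "1 \<le> a" using True ql v_def by simp
      moreover have "last q + (a - 1) = Suc m" using True v_def assms ql by simp
      ultimately have "q \<in> ?D" using qp nq hq by (simp add: Sset_def)
      then show ?thesis using pe' v_def by blast
    next
      case False
      then have lt: "last q < v" using lqv by simp
      then have e: "path_height h q m = int y - 1" using hlast hy by simp
      have "0 \<le> path_height h q m" using hq by simp
      then have y1: "1 \<le> y" using e by simp
      define a0 where "a0 = Suc m - last q"
      have "a0 \<in> {a..m}" using lt ql v_def assms by (auto simp: a0_def)
      moreover have "q \<in> Sset h m (y-1) a0" using qp nq hq e y1 ql by (simp add: Sset_def a0_def of_nat_diff)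
      ultimately have "q \<in> ?A" using y1 by auto
      then show ?thesis using pe' v_def by blast
    qed
  qed
next
  define v where "v = Suc (Suc m) - a"
  have v1: "1 \<le> v" "v \<le> Suc (Suc m)" using assms by (auto simp: v_def)
  show "?f ` (?D \<union> ?A) \<subseteq> ?L"
  proof
    fix p assume "p \<in> ?f ` (?D \<union> ?A)"
    then obtain q where pe: "p = ext q v" and qin: "q \<in> ?D \<union> ?A" by (auto simp: v_def)
    then obtain y0 a0 where q: "q \<in> Sset h m y0 a0" and
      cs: "(1 \<le> a \<and> y0 = Suc y \<and> a0 = a - 1) \<or> (1 \<le> y \<and> y0 = y - 1 \<and> a \<le> a0 \<and> a0 \<le> m)"
      by (auto split: if_splits)
    have qp: "is_perm (Suc m) q" and nq: "\<not> contains_231 q" and hq: "\<forall>k\<le>m. 0 \<le> path_height h q k"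
      and hy: "path_height h q m = int y0" and la: "last q + a0 = Suc m" using q by (auto simp: Sset_def)
    have lq: "length q = Suc m" using qp by (simp add: is_perm_def)
    have lqv: "last q \<le> v" and ltc: "last q < v \<longleftrightarrow> \<not> (1 \<le> a \<and> y0 = Suc y \<and> a0 = a - 1)"
      using cs la v_def assms by auto
    have pp: "is_perm (Suc (Suc m)) p" using perm_ext[OF qp v1] pe by simp
    have np: "\<not> contains_231 p" using c231_ext[OF qp v1(1)] pe nq lqv by auto
    have hl: "path_height h p (Suc m) = int y"
      using ph_ext_last[OF lq, of h v] pe hy ltc cs by (auto split: if_splits)
    have hp: "\<forall>k\<le>Suc m. 0 \<le> path_height h p k"
    proof (intro allI impI)
      fix k assume "k \<le> Suc m"
      then show "0 \<le> path_height h p k"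
        using hq ph_ext[OF lq, of k h v] pe hl by (cases "k = Suc m") auto
    qed
    have "last p + a = Suc (Suc m)" using pe v_def assms by simp
    then show "p \<in> ?L" using pp np hl hp by (simp add: Sset_def)
  qed
qed


fun R :: "nat \<Rightarrow> nat \<Rightarrow> nat \<Rightarrow> nat \<Rightarrow> nat" where
  "R h 0 y a = (if y = h \<and> a = 0 then 1 else 0)"
| "R h (Suc m) y a = (if 1 \<le> a then R h m (Suc y) (a-1) else 0) +
      (if 1 \<le> y then (\<Sum>a0\<in>{a..m}. R h m (y-1) a0) else 0)"

lemma Sset_0: "Sset h 0 y a = (if y = h \<and> a = 0 then {[1]} else {})"
proof -
  have "is_perm (Suc 0) p \<longleftrightarrow> p = [1]" for p
  proof
    assume "is_perm (Suc 0) p"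
    then obtain x where "p = [x]" "set p = {1}" by (auto simp: is_perm_def length_Suc_conv)
    then show "p = [1]" by simp
  qed (simp add: is_perm_def)
  moreover have "\<not> contains_231 [1]" by (simp add: contains_231_def)
  moreover have "path_height h p 0 = int h" for p by (simp add: path_height_def)
  ultimately show ?thesis unfolding Sset_def by auto
qed

lemma inj_ext: "inj (\<lambda>q. ext q v)"
  using inc_inj by (auto simp: inj_def ext_def inj_map_eq_map)

lemma card_Sset: "card (Sset h m y a) = R h m y a"
proof (induction m arbitrary: y a)
  case 0
  then show ?case by (simp add: Sset_0)
next
  case (Suc m)
  show ?case
  proof (cases "a \<le> Suc m")
    case False
    have "R h m (Suc y) (a - 1) = 0" using Suc.IH[of "Suc y" "a-1"] Sset_big[of m "a-1"] False by simp
    then show ?thesis using Sset_big[of "Suc m" a] False by simp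
  next
    case True
    define D where "D = (if 1 \<le> a then Sset h m (Suc y) (a-1) else {})"
    define A where "A = (if 1 \<le> y then (\<Union>a0\<in>{a..m}. Sset h m (y-1) a0) else {})"
    have fD: "finite D" and fA: "finite A" using Sset_finite by (auto simp: D_def A_def)
    have h1: "\<forall>p\<in>D. path_height h p m = int (Suc y)" by (simp add: D_def Sset_def)
    have h2: "\<forall>p\<in>A. path_height h p m = int (y - 1) \<and> 1 \<le> y" by (simp add: A_def Sset_def)
    have dis: "D \<inter> A = {}"
    proof (rule ccontr)
      assume "D \<inter> A \<noteq> {}"
      then obtain p where "p \<in> D" "p \<in> A" by blast
      then show False using h1 h2 by force
    qed
    have cD: "card D = (if 1 \<le> a then R h m (Suc y) (a-1) else 0)" using Suc.IH by (simp add: D_def)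
    have cA: "card A = (if 1 \<le> y then (\<Sum>a0\<in>{a..m}. R h m (y-1) a0) else 0)"
    proof (cases "1 \<le> y")
      case True
      have "card A = (\<Sum>a0\<in>{a..m}. card (Sset h m (y-1) a0))"
        unfolding A_def using True
        by (simp, intro card_UN_disjoint) (simp_all add: Sset_finite, auto simp: Sset_def)
      then show ?thesis using Suc.IH True by simp
    qed (simp add: A_def)
    have "card (Sset h (Suc m) y a) = card (D \<union> A)"
      unfolding Sset_Suc[OF True] D_def[symmetric] A_def[symmetric]
      by (rule card_image) (rule inj_on_subset[OF inj_ext], simp)
    also have "\<dots> = card D + card A" using fD fA dis by (rule card_Un_disjoint)
    finally show ?thesis using cD cA by simp
  qed
qed

lemma G_R: "G n h b = (\<Sum>a\<le>n. R h n b a)"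
proof -
  have "{p. hb_ballot n h b p \<and> \<not> contains_231 p} = (\<Union>a\<in>{..n}. Sset h n b a)"
  proof
    show "{p. hb_ballot n h b p \<and> \<not> contains_231 p} \<subseteq> (\<Union>a\<in>{..n}. Sset h n b a)"
    proof
      fix p assume p: "p \<in> {p. hb_ballot n h b p \<and> \<not> contains_231 p}"
      then have pp: "is_perm (Suc n) p" by (simp add: hb_ballot_def)
      have "p \<in> Sset h n b (Suc n - last p)" using p perm_last[OF pp] by (auto simp: Sset_def hb_ballot_def)
      moreover have "Suc n - last p \<le> n" using perm_last[OF pp] by linarith
      ultimately show "p \<in> (\<Union>a\<in>{..n}. Sset h n b a)" by blast
    qed
    show "(\<Union>a\<in>{..n}. Sset h n b a) \<subseteq> {p. hb_ballot n h b p \<and> \<not> contains_231 p}"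
      by (auto simp: Sset_def hb_ballot_def)
  qed
  then have "G n h b = card (\<Union>a\<in>{..n}. Sset h n b a)" by (simp add: G_def)
  also have "\<dots> = (\<Sum>a\<le>n. card (Sset h n b a))"
    by (intro card_UN_disjoint) (simp_all add: Sset_finite, auto simp: Sset_def)
  finally show ?thesis by (simp add: card_Sset)
qed


fun W :: "nat \<Rightarrow> nat \<Rightarrow> int \<Rightarrow> int \<Rightarrow> nat" where
  "W h 0 x y = (if x = int h \<and> y = 0 then 1 else 0)"
| "W h (Suc n) x y = (if 0 \<le> y \<and> y \<le> x then W h n x (y-1) + W h n x (y+1) + W h n (x-1) y + W h n (x+1) y else 0)"

definition WS :: "nat \<Rightarrow> nat \<Rightarrow> int \<times> int \<Rightarrow> (int \<times> int) list set" where
  "WS h n q = {w. length w = n + 1 \<and> w ! 0 = (int h, 0) \<and> w ! n = q \<and>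
     (\<forall>i\<le>n. GB_region (w ! i)) \<and> (\<forall>i<n. GB_step (w ! i) (w ! (i+1)))}"

lemma WS_0: "WS h 0 q = (if q = (int h, 0) then {[q]} else {})"
  by (auto simp: WS_def GB_region_def length_Suc_conv)

lemma GB_step_iff: "GB_step q' (x, y) \<longleftrightarrow> q' \<in> {(x, y-1), (x, y+1), (x-1, y), (x+1, y)}"
  by (cases q') (auto simp: GB_step_def)

lemma WS_Suc: "WS h (Suc n) (x, y) = (if GB_region (x, y) then
   (\<lambda>w. w @ [(x,y)]) ` (\<Union>q'\<in>{(x, y-1), (x, y+1), (x-1, y), (x+1, y)}. WS h n q') else {})"
proof (cases "GB_region (x, y)")
  case False
  then show ?thesis by (auto simp: WS_def)
next
  case True
  have "WS h (Suc n) (x, y) = (\<lambda>w. w @ [(x,y)]) ` (\<Union>q'\<in>{(x, y-1), (x, y+1), (x-1, y), (x+1, y)}. WS h n q')"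
  proof
    show "WS h (Suc n) (x, y) \<subseteq> (\<lambda>w. w @ [(x,y)]) ` (\<Union>q'\<in>{(x, y-1), (x, y+1), (x-1, y), (x+1, y)}. WS h n q')"
    proof
      fix w assume w: "w \<in> WS h (Suc n) (x, y)"
      then have lw: "length w = Suc (Suc n)" by (simp add: WS_def)
      define u where "u = butlast w"
      have "last w = w ! (length w - 1)" using lw by (intro last_conv_nth) auto
      then have "last w = (x,y)" using w lw by (simp add: WS_def)
      moreover have "w \<noteq> []" using lw by auto
      ultimately have we: "w = u @ [(x,y)]" unfolding u_def by (metis append_butlast_last_id)
      have lu: "length u = Suc n" using lw we by simp
      have un: "\<And>i. i \<le> n \<Longrightarrow> w ! i = u ! i" using we lu by (simp add: nth_append)
      have st: "GB_step (u ! n) (x, y)" using w we lu by (auto simp: WS_def nth_append)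
      have r: "GB_region (u!i)" if "i \<le> n" for i
      proof -
        have "GB_region (w!i)" using w that by (simp add: WS_def)
        with un[OF that] show ?thesis by simp
      qed
      have s: "GB_step (u!i) (u!(i+1))" if "i < n" for i
      proof -
        have "GB_step (w!i) (w!(i+1))" using w that by (simp add: WS_def)
        with un[of i] un[of "i+1"] that show ?thesis by simp
      qed
      have "u ! 0 = (int h, 0)" using w un[of 0] by (simp add: WS_def)
      then have "u \<in> WS h n (u ! n)" using r s lu by (simp add: WS_def)
      moreover have "u ! n \<in> {(x, y-1), (x, y+1), (x-1, y), (x+1, y)}" using st GB_step_iff by blast
      ultimately show "w \<in> (\<lambda>w. w @ [(x,y)]) ` (\<Union>q'\<in>{(x, y-1), (x, y+1), (x-1, y), (x+1, y)}. WS h n q')"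
        using we by blast
    qed
    show "(\<lambda>w. w @ [(x,y)]) ` (\<Union>q'\<in>{(x, y-1), (x, y+1), (x-1, y), (x+1, y)}. WS h n q') \<subseteq> WS h (Suc n) (x, y)"
    proof
      fix w assume "w \<in> (\<lambda>w. w @ [(x,y)]) ` (\<Union>q'\<in>{(x, y-1), (x, y+1), (x-1, y), (x+1, y)}. WS h n q')"
      then obtain u q' where we: "w = u @ [(x,y)]" and u: "u \<in> WS h n q'"
        and q': "q' \<in> {(x, y-1), (x, y+1), (x-1, y), (x+1, y)}" by blast
      have lu: "length u = Suc n" using u by (simp add: WS_def)
      have st: "GB_step q' (x, y)" using q' GB_step_iff by blast
      have "w ! i = u ! i" if "i \<le> n" for i using that we lu by (simp add: nth_append)
      moreover have "w ! Suc n = (x, y)" using we lu by (simp add: nth_append)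
      moreover have "\<forall>i\<le>Suc n. GB_region (w ! i)"
        using u True calculation by (auto simp: WS_def le_Suc_eq)
      moreover have "\<forall>i<Suc n. GB_step (w ! i) (w ! (i+1))"
      proof (intro allI impI)
        fix i assume i: "i < Suc n"
        show "GB_step (w ! i) (w ! (i+1))"
        proof (cases "i = n")
          case True
          then show ?thesis using st u \<open>w ! Suc n = (x, y)\<close> \<open>\<And>i. i \<le> n \<Longrightarrow> w ! i = u ! i\<close>
            by (simp add: WS_def)
        next
          case False
          then show ?thesis using u i \<open>\<And>i. i \<le> n \<Longrightarrow> w ! i = u ! i\<close> by (simp add: WS_def)
        qed
      qed
      ultimately show "w \<in> WS h (Suc n) (x, y)" using u we lu by (simp add: WS_def)
    qed
  qed
  then show ?thesis using True by simp
qed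

lemma WS_finite: "finite (WS h n q)"
proof (induction n arbitrary: q)
  case 0 then show ?case by (simp add: WS_0)
next
  case (Suc n)
  then show ?case by (cases q) (simp add: WS_Suc)
qed

lemma WS_disj: "q1 \<noteq> q2 \<Longrightarrow> WS h n q1 \<inter> WS h n q2 = {}"
  by (auto simp: WS_def)

lemma card_WS: "card (WS h n (x, y)) = W h n x y"
proof (induction n arbitrary: x y)
  case 0 then show ?case by (simp add: WS_0)
next
  case (Suc n)
  show ?case
  proof (cases "0 \<le> y \<and> y \<le> x")
    case False
    have e: "WS h (Suc n) (x,y) = {}" using WS_Suc[of h n x y] False by (simp add: GB_region_def)
    then show ?thesis using False by auto
  next
    case True
    define U where "U = (\<Union>q'\<in>{(x, y-1), (x, y+1), (x-1, y), (x+1, y)}. WS h n q')"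
    have "WS h (Suc n) (x, y) = (\<lambda>w. w @ [(x,y)]) ` U" using True WS_Suc[of h n x y] by (simp add: GB_region_def U_def)
    then have "card (WS h (Suc n) (x, y)) = card U"
      by (simp add: card_image inj_on_def)
    also have "\<dots> = (\<Sum>q'\<in>{(x, y-1), (x, y+1), (x-1, y), (x+1, y)}. card (WS h n q'))"
      unfolding U_def by (intro card_UN_disjoint) (simp_all add: WS_finite WS_disj)
    also have "\<dots> = W h n x (y-1) + W h n x (y+1) + W h n (x-1) y + W h n (x+1) y"
      using Suc.IH by simp
    finally show ?thesis using True by simp
  qed
qed

lemma H_W: "H n h b = W h n (int b) 0"
  using card_WS[of h n "int b" 0] by (simp add: H_def GB_walks_def WS_def)


lemma W_zero: "\<not> (0 \<le> y \<and> y \<le> x) \<Longrightarrow> W h n x y = 0"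
  by (cases n) auto

lemma choose_Suc_split: "(Suc a choose c) = (a choose c) + (if c = 0 then 0 else (a choose (c-1)))"
  by (cases c) auto

lemma swap_lemma:
  fixes g :: "nat \<Rightarrow> nat" and f :: "nat \<Rightarrow> nat"
  shows "(\<Sum>a\<le>Suc n. g a * (\<Sum>a0\<in>{a..n}. f a0)) = (\<Sum>a0\<le>n. (\<Sum>a\<le>a0. g a) * f a0)"
proof -
  have s1: "g a * (\<Sum>a0\<in>{a..n}. f a0) = (\<Sum>a0\<le>n. (if a \<le> a0 then g a * f a0 else 0))" for a
  proof -
    have "{a..n} = {a0\<in>{..n}. a \<le> a0}" by auto
    then have "(\<Sum>a0\<in>{a..n}. f a0) = (\<Sum>a0\<le>n. (if a \<le> a0 then f a0 else 0))"
      by (simp only: sum.inter_filter[OF finite_atMost])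
    then show ?thesis by (simp add: sum_distrib_left if_distrib cong: if_cong)
  qed
  have s3: "(\<Sum>a\<le>Suc n. (if a \<le> a0 then g a * f a0 else 0)) = (\<Sum>a\<le>a0. g a) * f a0" if "a0 \<le> n" for a0
  proof -
    have e: "{a\<in>{..Suc n}. a \<le> a0} = {..a0}" using that by auto
    have "(\<Sum>a\<le>Suc n. (if a \<le> a0 then g a * f a0 else 0)) = sum (\<lambda>a. g a * f a0) {a\<in>{..Suc n}. a \<le> a0}"
      by (rule sum.inter_filter[symmetric]) simp
    then have "(\<Sum>a\<le>Suc n. (if a \<le> a0 then g a * f a0 else 0)) = (\<Sum>a\<le>a0. g a * f a0)"
      by (simp only: e)
    then show ?thesis by (simp add: sum_distrib_right)
  qed
  have "(\<Sum>a\<le>Suc n. g a * (\<Sum>a0\<in>{a..n}. f a0)) = (\<Sum>a\<le>Suc n. \<Sum>a0\<le>n. (if a \<le> a0 then g a * f a0 else 0))"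
    using s1 by simp
  also have "\<dots> = (\<Sum>a0\<le>n. \<Sum>a\<le>Suc n. (if a \<le> a0 then g a * f a0 else 0))" by (rule sum.swap)
  also have "\<dots> = (\<Sum>a0\<le>n. (\<Sum>a\<le>a0. g a) * f a0)" using s3 by simp
  finally show ?thesis .
qed

lemma W_R: "W h n (int (y + c)) (int c) = (\<Sum>a\<le>n. (a choose c) * R h n y a)"
proof (induction n arbitrary: y c)
  case 0
  then show ?case by auto
next
  case (Suc n)
  define T where "T v d = (\<Sum>a\<le>n. (a choose d) * R h n v a)" for v d
  have IH: "W h n (int (v + d)) (int d) = T v d" for v d using Suc.IH T_def by simp
  have e1: "W h n (int (y+c)) (int c - 1) = (if c = 0 then 0 else T (Suc y) (c-1))"
  proof (cases c)
    case 0 then show ?thesis by (simp add: W_zero)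
  next
    case (Suc c')
    have a1: "int (y+c) = int (Suc y + c')" and a2: "int c - 1 = int c'" using Suc by auto
    show ?thesis unfolding a1 a2 IH using Suc by simp
  qed
  have e2: "W h n (int (y+c)) (int c + 1) = (if y = 0 then 0 else T (y-1) (Suc c))"
  proof (cases y)
    case 0 then show ?thesis by (simp add: W_zero)
  next
    case (Suc y')
    have a1: "int (y+c) = int (y' + Suc c)" and a2: "int c + 1 = int (Suc c)" using Suc by auto
    show ?thesis unfolding a1 a2 IH using Suc by simp
  qed
  have e3: "W h n (int (y+c) - 1) (int c) = (if y = 0 then 0 else T (y-1) c)"
  proof (cases y)
    case 0 then show ?thesis by (simp add: W_zero)
  next
    case (Suc y')
    have a1: "int (y+c) - 1 = int (y' + c)" using Suc by auto
    show ?thesis unfolding a1 IH using Suc by simp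
  qed
  have e4: "W h n (int (y+c) + 1) (int c) = T (Suc y) c"
  proof -
    have a1: "int (y+c) + 1 = int (Suc y + c)" by simp
    show ?thesis unfolding a1 IH by simp
  qed
  have L: "W h (Suc n) (int (y + c)) (int c) = (if c = 0 then 0 else T (Suc y) (c-1)) +
     (if y = 0 then 0 else T (y-1) (Suc c)) + (if y = 0 then 0 else T (y-1) c) + T (Suc y) c"
    using e1 e2 e3 e4 by simp
  define S1 where "S1 = (\<Sum>a\<le>Suc n. (a choose c) * (if 1 \<le> a then R h n (Suc y) (a-1) else 0))"
  define S2 where "S2 = (\<Sum>a\<le>Suc n. (a choose c) * (if 1 \<le> y then (\<Sum>a0\<in>{a..n}. R h n (y-1) a0) else 0))"
  have split: "(\<Sum>a\<le>Suc n. (a choose c) * R h (Suc n) y a) = S1 + S2"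
    unfolding S1_def S2_def by (simp add: sum.distrib distrib_left del: sum.atMost_Suc)
  have S1: "S1 = T (Suc y) c + (if c = 0 then 0 else T (Suc y) (c-1))"
  proof -
    have "S1 = (\<Sum>a\<le>n. (Suc a choose c) * R h n (Suc y) a)"
      unfolding S1_def by (subst sum.atMost_Suc_shift) simp
    also have "\<dots> = (\<Sum>a\<le>n. (a choose c) * R h n (Suc y) a + (if c = 0 then 0 else (a choose (c-1)) * R h n (Suc y) a))"
      by (intro sum.cong refl) (simp add: choose_Suc_split distrib_right)
    also have "\<dots> = T (Suc y) c + (if c = 0 then 0 else T (Suc y) (c-1))"
      by (simp add: sum.distrib T_def)
    finally show ?thesis .
  qed
  have S2: "S2 = (if y = 0 then 0 else T (y-1) c + T (y-1) (Suc c))"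
  proof (cases "y = 0")
    case True then show ?thesis by (simp add: S2_def)
  next
    case False
    then have "S2 = (\<Sum>a\<le>Suc n. (a choose c) * (\<Sum>a0\<in>{a..n}. R h n (y-1) a0))" by (simp add: S2_def)
    also have "\<dots> = (\<Sum>a0\<le>n. (\<Sum>a\<le>a0. a choose c) * R h n (y-1) a0)" by (rule swap_lemma)
    also have "\<dots> = (\<Sum>a0\<le>n. (Suc a0 choose Suc c) * R h n (y-1) a0)" by (simp add: sum_choose_upper)
    also have "\<dots> = (\<Sum>a0\<le>n. (a0 choose c) * R h n (y-1) a0 + (a0 choose Suc c) * R h n (y-1) a0)"
      by (simp add: distrib_right)
    also have "\<dots> = T (y-1) c + T (y-1) (Suc c)" by (simp add: sum.distrib T_def)
    finally show ?thesis using False by simp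
  qed
  show ?case using L split S1 S2 by simp
qed

theorem G_eq_H: "G n h b = H n h b"
  using W_R[of h n b 0] by (simp add: G_R H_W)


fun P :: "nat \<Rightarrow> int \<Rightarrow> int" where
  "P 0 k = (if k = 0 then 1 else 0)"
| "P (Suc N) k = P N (k - 1) + P N (k + 1)"

lemma P_bound: "int N < \<bar>k\<bar> \<Longrightarrow> P N k = 0"
proof (induction N arbitrary: k)
  case 0 then show ?case by simp
next
  case (Suc N)
  have "int N < \<bar>k - 1\<bar>" "int N < \<bar>k + 1\<bar>" using Suc.prems by auto
  then show ?case using Suc.IH by simp
qed

lemma P_sym: "P N (- k) = P N k"
proof (induction N arbitrary: k)
  case 0 then show ?case by simp
next
  case (Suc N)
  have e1: "- k - 1 = - (k + 1)" and e2: "- k + 1 = - (k - 1)" by simp_all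
  have "P N (- k - 1) = P N (k + 1)" unfolding e1 by (rule Suc.IH)
  moreover have "P N (- k + 1) = P N (k - 1)" unfolding e2 by (rule Suc.IH)
  ultimately show ?case by simp
qed

lemma P_parity: "odd (int N + k) \<Longrightarrow> P N k = 0"
proof (induction N arbitrary: k)
  case 0 then show ?case by auto
next
  case (Suc N)
  have "odd (int N + (k - 1))" "odd (int N + (k + 1))" using Suc.prems by (simp_all add: algebra_simps)
  then show ?case using Suc.IH by simp
qed

lemma P_binom: "P N (int N - 2 * int j) = int (N choose j)"
proof (induction N arbitrary: j)
  case 0 then show ?case by (cases j) auto
next
  case (Suc N)
  have e: "P (Suc N) (int (Suc N) - 2 * int j) = P N (int N - 2 * int j) + P N (int N - 2 * int j + 2)"
    by (simp add: algebra_simps)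
  show ?case
  proof (cases j)
    case 0
    have "P N (int N + 2) = 0" by (rule P_bound) simp
    then show ?thesis using e Suc.IH[of 0] 0 by simp
  next
    case (Suc j')
    have a: "P N (int N - 2 * int j) = int (N choose Suc j')"
      using Suc.IH[of "Suc j'"] Suc by simp
    have b: "P N (int N - 2 * int j + 2) = int (N choose j')"
      using Suc.IH[of j'] Suc by (simp add: algebra_simps)
    show ?thesis using e a b Suc by simp
  qed
qed

definition q :: "nat \<Rightarrow> int \<Rightarrow> int \<Rightarrow> int" where
  "q N a b = P N (b - a) - P N (b + a + 2)"

definition F :: "nat \<Rightarrow> int \<Rightarrow> int \<Rightarrow> int" where
  "F N x y = q N 0 (x - y) * q N 2 (x + y + 2) - q N 0 (x + y + 2) * q N 2 (x - y)"

lemma q_Suc: "q (Suc N) a b = q N a (b - 1) + q N a (b + 1)"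
  by (simp add: q_def algebra_simps)

lemma F_Suc: "F (Suc N) x y = F N x (y-1) + F N x (y+1) + F N (x-1) y + F N (x+1) y"
proof -
  have a1: "x - (y - 1) = x - y + 1" "x + (y - 1) + 2 = x + y + 2 - 1"
    "x - (y + 1) = x - y - 1" "x + (y + 1) + 2 = x + y + 2 + 1"
    "x - 1 - y = x - y - 1" "x - 1 + y + 2 = x + y + 2 - 1"
    "x + 1 - y = x - y + 1" "x + 1 + y + 2 = x + y + 2 + 1" by simp_all
  show ?thesis
    unfolding F_def q_Suc a1
    by (simp add: algebra_simps)
qed


lemma F_vanish1: "F N x (-1) = 0"
proof -
  have a: "x - (-1) = x + 1" "x + (-1) + 2 = x + 1" by simp_all
  show ?thesis unfolding F_def a by simp
qed

lemma F_vanish2: "F N x (x+1) = 0"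
proof -
  have "x - (x + 1) = -1" by simp
  moreover have "q N 0 (-1) = 0" unfolding q_def using P_sym[of N 1] by simp
  moreover have "q N 2 (-1) = 0" unfolding q_def using P_sym[of N 3] by simp
  ultimately show ?thesis unfolding F_def by simp
qed

lemma F_0: "0 \<le> y \<Longrightarrow> y \<le> x \<Longrightarrow> F 0 x y = (if x = 0 \<and> y = 0 then 1 else 0)"
  unfolding F_def q_def by auto

lemma W_F: "(0 \<le> y \<and> y \<le> x) \<or> y = -1 \<or> y = x+1 \<Longrightarrow> int (W 0 N x y) = F N x y"
proof (induction N arbitrary: x y)
  case 0
  then show ?case
  proof (elim disjE)
    assume "0 \<le> y \<and> y \<le> x" then show ?thesis using F_0 by simp
  next
    assume "y = -1" then show ?thesis using F_vanish1 by simp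
  next
    assume "y = x + 1" then show ?thesis using F_vanish2 by auto
  qed
next
  case (Suc N)
  show ?case
  proof (cases "0 \<le> y \<and> y \<le> x")
    case True
    have n1: "int (W 0 N x (y-1)) = F N x (y-1)" using True by (intro Suc.IH) auto
    have n2: "int (W 0 N x (y+1)) = F N x (y+1)" using True by (intro Suc.IH) auto
    have n3: "int (W 0 N (x-1) y) = F N (x-1) y" using True by (intro Suc.IH) auto
    have n4: "int (W 0 N (x+1) y) = F N (x+1) y" using True by (intro Suc.IH) auto
    show ?thesis using True n1 n2 n3 n4 F_Suc[of N x y] by simp
  next
    case False
    then have "y = -1 \<or> y = x + 1" using Suc.prems by auto
    then have "F (Suc N) x y = 0" using F_vanish1 F_vanish2 by auto
    then show ?thesis using False by auto
  qed
qed

definition E :: "nat \<Rightarrow> int \<Rightarrow> int" where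
  "E N x = P N x * P N x + P N (x+2) * P N (x+2) + P N (x-2) * P N (x+4) - P N x * P N (x+2)
     - P N (x-2) * P N (x+2) - P N x * P N (x+4)"

lemma F_E: "F N x 0 = E N x - E N (x+2)"
proof -
  have a: "x - 0 = x" "x + 0 + 2 = x + 2" "x - 0 - 2 = x - 2" "x + 2 - 2 = x" "x + 2 + 2 + 2 = x + 6"
    "x + 2 - 0 = x + 2" "x + 2 + 0 + 2 = x + 4" "x + 2 + 2 = x + 4" "x + 2 + 4 = x + 6" by simp_all
  show ?thesis unfolding F_def q_def E_def a by (simp add: algebra_simps)
qed

lemma sum_F: "(\<Sum>b<K. F N (int b) 0) = E N 0 + E N 1 - E N (int K) - E N (int K + 1)"
proof (induction K)
  case 0 then show ?case by simp
next
  case (Suc K)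
  have "int K + 1 + 2 = int K + 3" "int K + 2 = int K + 2" by simp_all
  then show ?case using Suc F_E[of N "int K"] by (simp add: algebra_simps)
qed

lemma E_big: "int N < x \<Longrightarrow> E N x = 0"
proof -
  assume a: "int N < x"
  have "P N x = 0" "P N (x+2) = 0" "P N (x+4) = 0" using a by (auto intro!: P_bound)
  then show ?thesis by (simp add: E_def)
qed


lemma absorb: "real (Suc k) * real (n choose Suc k) = real (n - k) * real (n choose k)"
proof -
  have "Suc k * (n choose Suc k) = (n - k) * (n choose k)"
    using binomial_absorption[of k n] binomial_absorb_comp[of n k] by simp
  then have "real (Suc k * (n choose Suc k)) = real ((n - k) * (n choose k))" by (rule arg_cong)
  then show ?thesis by (simp only: of_nat_mult)
qed

lemma stb: "real (Suc k) * real (Suc n choose Suc k) = real (Suc n) * real (n choose k)"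
proof -
  have "real (Suc k * (Suc n choose Suc k)) = real (Suc n * (n choose k))"
    using Suc_times_binomial[of k n] by (rule arg_cong)
  then show ?thesis by (simp only: of_nat_mult)
qed

lemma even_alg0:
  fixes c0 c1 c2 C2 m :: real
  assumes "c1 = m*c0/(m+1)" "c2 = (m-1)*c1/(m+2)" "C2 = (2*m+2)*((2*m+1)*c0/(m+1))/(m+1)" "m \<ge> 0"
  shows "c0*c0 + c1*c2 - c0*c1 - c0*c2 = c0/(m+1) * (C2/(m+2))"
proof -
  have a: "m + 1 \<noteq> 0" "m + 2 \<noteq> 0" using assms(4) by linarith+
  define t where "t = c0/(m+1)"
  define s where "s = 1/(m+2)"
  have c0: "c0 = t*(m+1)" using a by (simp add: t_def)
  have hs: "s*(m+2) = 1" using a by (simp add: s_def)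
  have e1: "c1 = m*t" using assms(1) by (simp add: t_def)
  have e2: "c2 = (m-1)*m*t*s" using assms(2) e1 by (simp add: s_def)
  have x1: "(2*m+1)*c0/(m+1) = (2*m+1)*t" by (simp add: t_def)
  have x2: "(2*m+2)*((2*m+1)*t)/(m+1) = 2*(2*m+1)*t"
  proof -
    have "(2*m+2)*((2*m+1)*t) = (2*(2*m+1)*t) * (m+1)" by algebra
    then show ?thesis using a(1) by (simp only: nonzero_mult_div_cancel_right[OF a(1)])
  qed
  have e3: "C2 = 2*(2*m+1)*t" unfolding assms(3) x1 x2 ..
  have e4: "c0/(m+1) * (C2/(m+2)) = t * (2*(2*m+1)*t) * s" using e3 by (simp add: t_def s_def)
  show ?thesis unfolding e4 unfolding e1 e2 c0 using hs by algebra
qed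

lemma even_alg:
  fixes m :: nat
  shows "real (2*m choose m) * real (2*m choose m) + real (2*m choose (m+1)) * real (2*m choose (m+2))
     - real (2*m choose m) * real (2*m choose (m+1)) - real (2*m choose m) * real (2*m choose (m+2))
     = catalan m * catalan (m+1)"
proof -
  define c0 where "c0 = real (2*m choose m)"
  define c1 where "c1 = real (2*m choose (m+1))"
  define c2 where "c2 = real (2*m choose (m+2))"
  define C2 where "C2 = real (2*(m+1) choose (m+1))"
  have f1: "c1 = real m * c0 / (real m + 1)"
  proof -
    have "real (Suc m) * c1 = real (2*m - m) * c0" using absorb[of m "2*m"] by (simp add: c0_def c1_def)
    then show ?thesis by (simp add: field_simps)
  qed
  have f2: "c2 = (real m - 1) * c1 / (real m + 2)"
  proof (cases m)
    case 0 then show ?thesis by (simp add: c1_def c2_def)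
  next
    case (Suc m')
    have "real (Suc (Suc m)) * c2 = real (2*m - Suc m) * c1"
      using absorb[of "Suc m" "2*m"] by (simp add: c1_def c2_def)
    moreover have "real (2*m - Suc m) = real m - 1" using Suc by simp
    ultimately show ?thesis by (simp add: field_simps)
  qed
  have g2: "real (Suc (2*m) choose Suc m) = (2 * real m + 1) * c0 / (real m + 1)"
  proof -
    have "real (Suc m) * real (Suc (2*m) choose Suc m) = real (Suc (2*m)) * c0"
      using stb[of m "2*m"] by (simp add: c0_def)
    then show ?thesis by (simp add: field_simps)
  qed
  have g3: "(Suc (2*m) choose m) = (Suc (2*m) choose Suc m)"
    using binomial_symmetric[of m "Suc (2*m)"] by (simp add: Suc_diff_le)
  have C2v: "C2 = (2 * real m + 2) * ((2 * real m + 1) * c0 / (real m + 1)) / (real m + 1)"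
  proof -
    have "2*(m+1) = Suc (Suc (2*m))" by simp
    then have c: "C2 = real (Suc (Suc (2*m)) choose Suc m)" by (simp add: C2_def)
    define X where "X = real (Suc (Suc (2*m)) choose Suc m)"
    define Y where "Y = real (Suc (2*m) choose Suc m)"
    have h: "real (Suc m) * X = real (Suc (Suc (2*m))) * Y"
      unfolding X_def Y_def using stb[of m "Suc (2*m)"] g3 by simp
    have Y: "Y = (2 * real m + 1) * c0 / (real m + 1)" using g2 Y_def by simp
    have "X = real (Suc (Suc (2*m))) * Y / real (Suc m)" using h
      by (simp add: field_simps del: of_nat_Suc)
    then show ?thesis unfolding c X_def[symmetric] Y by (simp add: field_simps)
  qed
  have cat: "catalan m * catalan (m+1) = c0/(real m+1) * (C2/(real m+2))"
    unfolding catalan_def c0_def C2_def by (simp add: field_simps)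
  show ?thesis using even_alg0[OF f1 f2 C2v] unfolding cat c0_def[symmetric] c1_def[symmetric] c2_def[symmetric]
    by simp
qed

lemma odd_alg:
  fixes m :: nat
  shows "(real ((2*m+1) choose (m+1)) - real ((2*m+1) choose (m+2))) * (real ((2*m+1) choose (m+1)) - real ((2*m+1) choose (m+2)))
     = catalan (m+1) * catalan (m+1)"
proof -
  define d0 where "d0 = real ((2*m+1) choose (m+1))"
  define d1 where "d1 = real ((2*m+1) choose (m+2))"
  have f1: "d1 = real m * d0 / (real m + 2)"
  proof -
    have "real (Suc (Suc m)) * d1 = real (2*m+1 - Suc m) * d0"
      using absorb[of "Suc m" "2*m+1"] by (simp add: d0_def d1_def)
    then show ?thesis by (simp add: field_simps)
  qed
  have g3: "(Suc (2*m) choose m) = (Suc (2*m) choose Suc m)"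
    using binomial_symmetric[of m "Suc (2*m)"] by (simp add: Suc_diff_le)
  have C2: "real (2*(m+1) choose (m+1)) = 2 * d0"
  proof -
    have "2*(m+1) = Suc (Suc (2*m))" by simp
    then have e: "real (2*(m+1) choose (m+1)) = real (Suc (Suc (2*m)) choose Suc m)" by simp
    define X where "X = real (Suc (Suc (2*m)) choose Suc m)"
    have h: "real (Suc m) * X = real (Suc (Suc (2*m))) * d0"
      unfolding X_def using stb[of m "Suc (2*m)"] g3 by (simp add: d0_def)
    have "real (Suc (Suc (2*m))) = real (Suc m) * 2" by simp
    then have "real (Suc m) * X = real (Suc m) * (2 * d0)" using h by simp
    then have "X = 2 * d0" by simp
    then show ?thesis unfolding e X_def .
  qed
  have cat: "catalan (m+1) = 2 * d0 / (real m + 2)" unfolding catalan_def using C2 by (simp add: field_simps)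
  have "(d0 - d1) = 2 * d0 / (real m + 2)" unfolding f1 by (simp add: field_simps)
  then show ?thesis unfolding cat d0_def[symmetric] d1_def[symmetric] by simp
qed


declare P.simps(2)[simp del]

lemma ph_bound: "path_height h p k \<le> int h + int k"
proof (induction k)
  case 0 then show ?case by (simp add: path_height_def)
next
  case (Suc k)
  have "path_height h p (Suc k) = path_height h p k + (if p ! k < p ! (k+1) then 1 else -1)"
    by (simp add: path_height_def)
  then show ?case using Suc by simp
qed

lemma ballot_card: "card {p. ballot_perm (Suc N) p \<and> \<not> contains_231 p} = (\<Sum>b\<le>N. G N 0 b)"
proof -
  have "{p. ballot_perm (Suc N) p \<and> \<not> contains_231 p} = (\<Union>b\<in>{..N}. {p. hb_ballot N 0 b p \<and> \<not> contains_231 p})"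
  proof
    show "{p. ballot_perm (Suc N) p \<and> \<not> contains_231 p} \<subseteq> (\<Union>b\<in>{..N}. {p. hb_ballot N 0 b p \<and> \<not> contains_231 p})"
    proof
      fix p assume p: "p \<in> {p. ballot_perm (Suc N) p \<and> \<not> contains_231 p}"
      then have h: "\<forall>k\<le>N. 0 \<le> path_height 0 p k" by (simp add: ballot_perm_def)
      then have "0 \<le> path_height 0 p N" by simp
      moreover have "path_height 0 p N \<le> int N" using ph_bound[of 0 p N] by simp
      ultimately have "hb_ballot N 0 (nat (path_height 0 p N)) p" "nat (path_height 0 p N) \<le> N"
        using p h by (auto simp: hb_ballot_def ballot_perm_def)
      then show "p \<in> (\<Union>b\<in>{..N}. {p. hb_ballot N 0 b p \<and> \<not> contains_231 p})" using p by blast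
    qed
    show "(\<Union>b\<in>{..N}. {p. hb_ballot N 0 b p \<and> \<not> contains_231 p}) \<subseteq> {p. ballot_perm (Suc N) p \<and> \<not> contains_231 p}"
      by (auto simp: hb_ballot_def ballot_perm_def)
  qed
  then have "card {p. ballot_perm (Suc N) p \<and> \<not> contains_231 p} = card (\<Union>b\<in>{..N}. {p. hb_ballot N 0 b p \<and> \<not> contains_231 p})"
    by simp
  also have "\<dots> = (\<Sum>b\<le>N. card {p. hb_ballot N 0 b p \<and> \<not> contains_231 p})"
  proof (rule card_UN_disjoint)
    show "finite {..N}" by simp
    show "\<forall>i\<in>{..N}. finite {p. hb_ballot N 0 i p \<and> \<not> contains_231 p}"
      by (auto intro: finite_subset[OF _ perm_finite[of "Suc N"]] simp: hb_ballot_def)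
    show "\<forall>i\<in>{..N}. \<forall>j\<in>{..N}. i \<noteq> j \<longrightarrow> {p. hb_ballot N 0 i p \<and> \<not> contains_231 p} \<inter> {p. hb_ballot N 0 j p \<and> \<not> contains_231 p} = {}"
      by (auto simp: hb_ballot_def)
  qed
  finally show ?thesis by (simp add: G_def)
qed

lemma count_E: "int (card {p. ballot_perm (Suc N) p \<and> \<not> contains_231 p}) = E N 0 + E N 1"
proof -
  have "int (card {p. ballot_perm (Suc N) p \<and> \<not> contains_231 p}) = (\<Sum>b\<le>N. int (G N 0 b))"
    using ballot_card by simp
  also have "\<dots> = (\<Sum>b\<le>N. F N (int b) 0)"
  proof (intro sum.cong refl)
    fix b assume "b \<in> {..N}"
    have "int (G N 0 b) = int (W 0 N (int b) 0)" by (simp add: G_eq_H H_W)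
    also have "\<dots> = F N (int b) 0" by (rule W_F) simp
    finally show "int (G N 0 b) = F N (int b) 0" .
  qed
  also have "\<dots> = (\<Sum>b<Suc N. F N (int b) 0)" by (simp add: lessThan_Suc_atMost)
  also have "\<dots> = E N 0 + E N 1 - E N (int (Suc N)) - E N (int (Suc N) + 1)" by (rule sum_F)
  also have "\<dots> = E N 0 + E N 1" using E_big[of N "int (Suc N)"] E_big[of N "int (Suc N) + 1"] by simp
  finally show ?thesis .
qed

lemma P_even: "P (2*m) (2 * int i) = int (2*m choose (m+i))"
proof -
  have e: "- (2 * int i) = int (2*m) - 2 * int (m+i)" by simp
  have "P (2*m) (2 * int i) = P (2*m) (- (2 * int i))" by (rule P_sym[symmetric])
  also have "\<dots> = P (2*m) (int (2*m) - 2 * int (m+i))" by (simp only: e)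
  also have "\<dots> = int (2*m choose (m+i))" by (rule P_binom)
  finally show ?thesis .
qed

lemma P_odd: "P (2*m+1) (2 * int i + 1) = int ((2*m+1) choose (m+1+i))"
proof -
  have e: "- (2 * int i + 1) = int (2*m+1) - 2 * int (m+1+i)" by simp
  have "P (2*m+1) (2 * int i + 1) = P (2*m+1) (- (2 * int i + 1))" by (rule P_sym[symmetric])
  also have "\<dots> = P (2*m+1) (int (2*m+1) - 2 * int (m+1+i))" by (simp only: e)
  also have "\<dots> = int ((2*m+1) choose (m+1+i))" by (rule P_binom)
  finally show ?thesis .
qed

lemma even_value: "real_of_int (E (2*m) 0 + E (2*m) 1) = catalan m * catalan (m+1)"
proof -
  have odd0: "P (2*m) k = 0" if "odd k" for k using that by (intro P_parity) simp
  have "E (2*m) 1 = 0" unfolding E_def using odd0[of 1] odd0[of 3] odd0[of 5] odd0[of "-1"] by simp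
  moreover have "P (2*m) 0 = int (2*m choose m)" using P_even[of m 0] by simp
  moreover have "P (2*m) 2 = int (2*m choose (m+1))" using P_even[of m 1] by simp
  moreover have "P (2*m) (-2) = int (2*m choose (m+1))" using P_even[of m 1] P_sym[of "2*m" 2] by simp
  moreover have "P (2*m) 4 = int (2*m choose (m+2))" using P_even[of m 2] by simp
  ultimately have "E (2*m) 0 + E (2*m) 1 = int (2*m choose m) * int (2*m choose m) + int (2*m choose (m+1)) * int (2*m choose (m+2))
     - int (2*m choose m) * int (2*m choose (m+1)) - int (2*m choose m) * int (2*m choose (m+2))"
    unfolding E_def by (simp add: algebra_simps)
  then show ?thesis using even_alg[of m] by simp
qed

lemma odd_value: "real_of_int (E (2*m+1) 0 + E (2*m+1) 1) = catalan (m+1) * catalan (m+1)"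
proof -
  have ev0: "P (2*m+1) k = 0" if "even k" for k using that by (intro P_parity) simp
  have "E (2*m+1) 0 = 0" unfolding E_def using ev0[of 0] ev0[of 2] ev0[of 4] ev0[of "-2"] by simp
  moreover have "P (2*m+1) 1 = int ((2*m+1) choose (m+1))" using P_odd[of m 0] by simp
  moreover have "P (2*m+1) (-1) = int ((2*m+1) choose (m+1))" using P_odd[of m 0] P_sym[of "2*m+1" 1] by simp
  moreover have "P (2*m+1) 3 = int ((2*m+1) choose (m+2))" using P_odd[of m 1] by simp
  moreover have "P (2*m+1) 5 = int ((2*m+1) choose (m+3))" using P_odd[of m 2] by (simp add: numeral_3_eq_3)
  ultimately have "E (2*m+1) 0 + E (2*m+1) 1 = (int ((2*m+1) choose (m+1)) - int ((2*m+1) choose (m+2))) * (int ((2*m+1) choose (m+1)) - int ((2*m+1) choose (m+2)))"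
    unfolding E_def by (simp add: algebra_simps)
  then show ?thesis using odd_alg[of m] by simp
qed

theorem theorem4p6:
  shows "(\<forall>n h b. G n h b = H n h b) \<and>
         (\<forall>n\<ge>1. real (card {p. ballot_perm n p \<and> \<not> contains_231 p}) =
                  catalan (n div 2) * catalan ((n + 1) div 2))"
proof (intro conjI allI impI)
  fix n h b show "G n h b = H n h b" by (rule G_eq_H)
next
  fix n :: nat assume "n \<ge> 1"
  then obtain N where n: "n = Suc N" by (cases n) auto
  have c: "real (card {p. ballot_perm n p \<and> \<not> contains_231 p}) = real_of_int (E N 0 + E N 1)"
    using count_E[of N] n by (metis of_int_of_nat_eq)
  show "real (card {p. ballot_perm n p \<and> \<not> contains_231 p}) = catalan (n div 2) * catalan ((n + 1) div 2)"
  proof (cases "even N")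
    case True
    then obtain m where N: "N = 2*m" by blast
    have "n div 2 = m" "(n+1) div 2 = m + 1" using n N by auto
    then show ?thesis using c even_value[of m] N by simp
  next
    case False
    then obtain m where N: "N = 2*m+1" using oddE by blast
    have "n div 2 = m + 1" "(n+1) div 2 = m + 1" using n N by auto
    then show ?thesis using c odd_value[of m] N by simp
  qed
qed


end
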